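(* Let $(L,\vee,\wedge,0,1)$ be a complemented lattice with $0\ne1$ and consider the statements: (i) $x^+\vee y^+\le_1(x\wedge y)^+$ for all $x,y\in L$; (ii) for all $x,y\in L$, $x\le y$ implies $y^+\le_1x^+$; (iii) $(x\vee y)^+\le_1x^+\wedge y^+$ for all $x,y\in L$. Then (i) implies (ii), and (ii) is equivalent to (iii).
   Context: For $a\in L$, $a^+:=\{x\in L\mid a\vee x=1,\ a\wedge x=0\}$ (the set of all complements of $a$). For $A,B\subseteq L$: $A\vee B:=\{x\vee y\mid x\in A,y\in B\}$, $A\wedge B:=\{x\wedge y\mid x\in A,y\in B\}$, and $A\le_1B$ means that for every $x\in A$ there exists $y\in B$ with $x\le y$. *)

theory Defs
  imports Main
begin

definition compls :: "'a::bounded_lattice \<Rightarrow> 'a set" where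
  "compls a = {x. sup a x = top \<and> inf a x = bot}"

definition set_sup :: "'a::lattice set \<Rightarrow> 'a set \<Rightarrow> 'a set" where
  "set_sup A B = {sup x y | x y. x \<in> A \<and> y \<in> B}"

definition set_inf :: "'a::lattice set \<Rightarrow> 'a set \<Rightarrow> 'a set" where
  "set_inf A B = {inf x y | x y. x \<in> A \<and> y \<in> B}"

definition le1 :: "'a::order set \<Rightarrow> 'a set \<Rightarrow> bool" where
  "le1 A B \<longleftrightarrow> (\<forall>x\<in>A. \<exists>y\<in>B. x \<le> y)"

end

theory Submission
  imports Defs
begin

theorem proposition3:
  assumes complemented: "\<And>a::'a::bounded_lattice. compls a \<noteq> {}"
    and nontriv: "(bot::'a) \<noteq> top"
  shows "((\<forall>x y::'a. le1 (set_sup (compls x) (compls y)) (compls (inf x y)))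
            \<longrightarrow> (\<forall>x y::'a. x \<le> y \<longrightarrow> le1 (compls y) (compls x)))
       \<and> ((\<forall>x y::'a. x \<le> y \<longrightarrow> le1 (compls y) (compls x))
            \<longleftrightarrow> (\<forall>x y::'a. le1 (compls (sup x y)) (set_inf (compls x) (compls y))))"
proof (intro conjI impI allI iffI)
  fix x y :: 'a
  assume H: "\<forall>x y::'a. le1 (set_sup (compls x) (compls y)) (compls (inf x y))" and xy: "x \<le> y"
  show "le1 (compls y) (compls x)" unfolding le1_def
  proof
    fix b assume b: "b \<in> compls y"
    obtain c where c: "c \<in> compls x" using complemented by blast
    have "sup b c \<in> set_sup (compls y) (compls x)" using b c unfolding set_sup_def by blast
    then obtain a where a: "a \<in> compls (inf y x)" "sup b c \<le> a" using H unfolding le1_def by blast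
    have "inf y x = x" using xy by (simp add: inf_absorb2)
    with a show "\<exists>a\<in>compls x. b \<le> a" by (metis le_supE)
  qed
next
  fix x y :: 'a
  assume H: "\<forall>x y::'a. x \<le> y \<longrightarrow> le1 (compls y) (compls x)"
  show "le1 (compls (sup x y)) (set_inf (compls x) (compls y))" unfolding le1_def
  proof
    fix z assume z: "z \<in> compls (sup x y)"
    obtain a where a: "a \<in> compls x" "z \<le> a" using H z unfolding le1_def
      by (meson sup_ge1)
    obtain b where b: "b \<in> compls y" "z \<le> b" using H z unfolding le1_def
      by (meson sup_ge2)
    have "inf a b \<in> set_inf (compls x) (compls y)" using a b unfolding set_inf_def by blast
    moreover have "z \<le> inf a b" using a b by simp
    ultimately show "\<exists>w\<in>set_inf (compls x) (compls y). z \<le> w" by blast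
  qed
next
  fix x y :: 'a
  assume H: "\<forall>x y::'a. le1 (compls (sup x y)) (set_inf (compls x) (compls y))" and xy: "x \<le> y"
  have e: "sup x y = y" using xy by (simp add: sup_absorb2)
  show "le1 (compls y) (compls x)" unfolding le1_def
  proof
    fix z assume z: "z \<in> compls y"
    then obtain w where w: "w \<in> set_inf (compls x) (compls y)" "z \<le> w"
      using H e unfolding le1_def by metis
    then obtain a b where "a \<in> compls x" "w = inf a b" unfolding set_inf_def by blast
    with w show "\<exists>a\<in>compls x. z \<le> a" by (metis le_infE)
  qed
qed

end
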